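(* There is an algorithm which, on input a prime $p$ and a primitive root $g$ modulo $p$ with $1<g<p$, computes every value $q_p(u)$, $0\le u<p-1$, using $O(p)$ arithmetic operations on $O(\log p)$-bit integers.
   Context: For a prime $p$ and an integer $u$ with $\gcd(u,p)=1$, the Fermat quotient $q_p(u)$ is the unique integer with $q_p(u)\equiv (u^{p-1}-1)/p \pmod p$ and $0\le q_p(u)\le p-1$; also $q_p(kp)=0$ for all $k\in\mathbb{Z}$. *)

theory Defs
  imports "HOL-Number_Theory.Number_Theory"
begin

definition fermat_quotient :: "nat \<Rightarrow> int \<Rightarrow> int" where
  "fermat_quotient p u =
     (if int p dvd u then 0 else ((u ^ (p - 1) - 1) div int p) mod int p)"

text \<open>Each executed instruction costs one step (one arithmetic operation or
  one memory access / jump). The bit length of the integers handled is measured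
  separately by bounding the absolute values of all memory cells during the run.\<close>

datatype instr =
    Const nat int
  | Add nat nat nat
  | Sub nat nat nat
  | Mul nat nat nat
  | Div nat nat nat
  | Rem nat nat nat
  | Load nat nat
  | Store nat nat
  | Jz nat nat
  | Jmp nat
  | Halt

type_synonym state = "nat \<times> (int \<Rightarrow> int)"

fun exec_instr :: "instr \<Rightarrow> state \<Rightarrow> state" where
  "exec_instr (Const r k) (pc, M) = (pc + 1, M(int r := k))"
| "exec_instr (Add r a b) (pc, M) = (pc + 1, M(int r := M (int a) + M (int b)))"
| "exec_instr (Sub r a b) (pc, M) = (pc + 1, M(int r := M (int a) - M (int b)))"
| "exec_instr (Mul r a b) (pc, M) = (pc + 1, M(int r := M (int a) * M (int b)))"
| "exec_instr (Div r a b) (pc, M) = (pc + 1, M(int r := M (int a) div M (int b)))"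
| "exec_instr (Rem r a b) (pc, M) = (pc + 1, M(int r := M (int a) mod M (int b)))"
| "exec_instr (Load r a) (pc, M) = (pc + 1, M(int r := M (M (int a))))"
| "exec_instr (Store a b) (pc, M) = (pc + 1, M(M (int a) := M (int b)))"
| "exec_instr (Jz r l) (pc, M) = (if M (int r) = 0 then (l, M) else (pc + 1, M))"
| "exec_instr (Jmp l) (pc, M) = (l, M)"
| "exec_instr Halt (pc, M) = (pc, M)"

definition halted :: "instr list \<Rightarrow> state \<Rightarrow> bool" where
  "halted prog s \<longleftrightarrow> fst s \<ge> length prog \<or> prog ! fst s = Halt"

definition step :: "instr list \<Rightarrow> state \<Rightarrow> state" where
  "step prog s = (if halted prog s then s else exec_instr (prog ! fst s) s)"

definition run :: "instr list \<Rightarrow> nat \<Rightarrow> state \<Rightarrow> state" where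
  "run prog n s = (step prog ^^ n) s"

definition init_state :: "nat \<Rightarrow> nat \<Rightarrow> state" where
  "init_state p g = (0, (\<lambda>_. 0)(0 := int p, 1 := int g))"

text \<open>The output q_p(u) is expected in cell 2 + u.\<close>

end

theory Submission
  imports Defs
begin


lemma pow_lift:
  fixes b t P :: int
  shows "\<exists>r. (b + t*P)^(Suc n) = b^(Suc n) + int (Suc n) * b^n * t * P + P^2 * r"
proof (induction n)
  case 0
  then show ?case by (rule exI[of _ 0]) simp
next
  case (Suc n)
  then obtain r where r: "(b + t*P)^(Suc n) = b^(Suc n) + int (Suc n) * b^n * t * P + P^2 * r" by blast
  have "(b + t*P)^(Suc (Suc n)) = (b + t*P) * (b^(Suc n) + int (Suc n) * b^n * t * P + P^2 * r)"
    by (subst power_Suc, subst r) simp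
  also have "\<dots> = b^(Suc (Suc n)) + int (Suc (Suc n)) * b^(Suc n) * t * P + P^2 * (r*b + int (Suc n) * b^n * t^2 + t*P*r)"
    by (simp add: algebra_simps power2_eq_square)
  finally show ?case by blast
qed

lemma cong_pow_p2:
  fixes a b P :: int
  assumes "[a = b] (mod P)" "p = nat P" "P > 0"
  shows "[a^p = b^p] (mod P^2)"
proof (cases p)
  case 0 then show ?thesis by simp
next
  case (Suc n)
  from assms(1) obtain t where t: "a = b + t*P"
    by (metis cong_iff_lin cong_sym mult.commute)
  obtain r where r: "(b + t*P)^(Suc n) = b^(Suc n) + int (Suc n) * b^n * t * P + P^2 * r"
    using pow_lift by blast
  have "int (Suc n) = P" using Suc assms by simp
  then have "a^p = b^p + P^2 * (b^n*t + r)" using r t Suc by (simp add: algebra_simps power2_eq_square)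
  then have "P^2 dvd a^p - b^p" by simp
  then show ?thesis by (simp add: cong_iff_dvd_diff)
qed

lemma key:
  fixes p k :: nat and G :: int
  assumes p: "prime p" and nd: "\<not> int p dvd G"
  shows "((G^((p-2)*k) mod int p) * ((G^(p*k) mod (int p)^2) div int p)) mod int p
           = fermat_quotient p (G^k mod int p)"
proof -
  define P where "P = int p"
  have P2: "P \<ge> 2" using p prime_ge_2_nat P_def by simp
  have pP: "prime P" using p P_def by simp
  define x where "x = G^k mod P"
  have x0: "0 \<le> x" "x < P" using P2 x_def by auto
  have nx: "\<not> P dvd x"
  proof
    assume "P dvd x"
    then have "P dvd G^k" using x_def by (simp add: dvd_mod_iff)
    then have "P dvd G" using pP prime_dvd_power by blast
    then show False using nd P_def by simp
  qed
  define N where "N = x^(p-1)"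
  have N1: "[N = 1] (mod P)"
  proof -
    have "\<not> p dvd nat x"
    proof
      assume "p dvd nat x"
      then have "int p dvd int (nat x)" by (simp only: of_nat_dvd_iff)
      then show False using nx x0 P_def by simp
    qed
    then have "[(nat x)^(p-1) = 1] (mod p)" using fermat_theorem p by blast
    then have "[int ((nat x)^(p-1)) = int 1] (mod int p)" using cong_int_iff by blast
    then show ?thesis using x0 N_def P_def by simp
  qed
  define Q where "Q = (N - 1) div P"
  have NQ: "N = 1 + P*Q" using N1 Q_def by (simp add: cong_iff_dvd_diff cong_sym_eq)
  define B where "B = G^(p*k) mod P^2"
  have xpow: "x^p = x + P*(x*Q)"
  proof -
    have "x^p = x * N" using N_def p prime_gt_0_nat by (metis Suc_diff_1 power_Suc)
    then show ?thesis using NQ by (simp add: algebra_simps)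
  qed
  have c1: "[G^k = x] (mod P)" using x_def by (simp add: cong_def)
  have "[(G^k)^p = x^p] (mod P^2)" using cong_pow_p2[OF c1] P_def P2 by simp
  then have Bc: "[B = x + P*(x*Q)] (mod P^2)" using B_def xpow
    by (simp add: power_mult mult.commute cong_def)
  have BmodP: "B mod P = x"
  proof -
    have "[B = x + P*(x*Q)] (mod P)" using Bc by (rule cong_dvd_modulus) (simp add: power2_eq_square)
    then have "[B = x] (mod P)" by (simp add: cong_def)
    then show ?thesis using x0 by (simp add: cong_def)
  qed
  have Bdec: "B = x + P*(B div P)" using BmodP by (metis mod_div_mult_eq add.commute mult.commute)
  have "[x + P*(B div P) = x + P*(x*Q)] (mod P^2)" using Bc Bdec by simp
  then have "P^2 dvd P*(B div P - x*Q)" by (simp add: cong_iff_dvd_diff algebra_simps)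
  then have "P dvd (B div P - x*Q)" using P2 by (simp add: power2_eq_square)
  then have D: "[B div P = x*Q] (mod P)" by (simp add: cong_iff_dvd_diff)
  define h where "h = G^((p-2)*k) mod P"
  have hx: "[h * x = 1] (mod P)"
  proof -
    have "[h*x = G^((p-2)*k) * G^k] (mod P)" using h_def x_def by (simp add: cong_def mod_mult_eq)
    also have "G^((p-2)*k) * G^k = (G^k)^(p-1)"
      using P2 P_def by (simp add: power_add[symmetric] power_mult[symmetric] algebra_simps)
    also have "[(G^k)^(p-1) = x^(p-1)] (mod P)" using c1 by (rule cong_pow)
    also have "[x^(p-1) = 1] (mod P)" using N1 N_def by simp
    finally show ?thesis .
  qed
  have "[h * (B div P) = h*(x*Q)] (mod P)" using D by (rule cong_scalar_left)
  also have "h*(x*Q) = (h*x)*Q" by simp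
  also have "[(h*x)*Q = 1*Q] (mod P)" using hx by (rule cong_scalar_right)
  finally have "(h * (B div P)) mod P = Q mod P" by (simp add: cong_def)
  moreover have "fermat_quotient p x = Q mod P"
    using nx unfolding fermat_quotient_def Q_def N_def P_def by simp
  ultimately show ?thesis using h_def B_def x_def P_def by simp
qed



definition prog :: "instr list" where
"prog = [
  Mul 4 0 0, Const 5 1, Const 7 1, Sub 6 0 5, Sub 6 6 5,
  Jz 6 10, Mul 8 7 1, Rem 7 8 4, Sub 6 6 5, Jmp 5,
  Rem 9 7 0, Mul 8 7 1, Rem 8 8 4, Mul 8 8 1, Rem 10 8 4,
  Const 11 1, Const 12 1, Const 13 1, Sub 6 0 5,
  Jz 6 34, Div 8 13 0, Mul 8 8 12, Rem 8 8 0, Const 14 (-2), Sub 14 14 11, Store 14 8,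
  Mul 15 11 1, Rem 11 15 0, Mul 15 12 9, Rem 12 15 0, Mul 15 13 10, Rem 13 15 4, Sub 6 6 5, Jmp 19,
  Const 1 1, Sub 1 0 1, Jz 1 44, Const 1 0, Sub 1 1 0, Load 1 1, Store 0 1, Const 1 1, Sub 0 0 1, Jmp 34,
  Halt]"

lemma length_prog: "length prog = 45" by (simp add: prog_def)

lemma prog_nth:
  "prog ! 0 = Mul 4 0 0"
  "prog ! 1 = Const 5 1"
  "prog ! 2 = Const 7 1"
  "prog ! 3 = Sub 6 0 5"
  "prog ! 4 = Sub 6 6 5"
  "prog ! 5 = Jz 6 10"
  "prog ! 6 = Mul 8 7 1"
  "prog ! 7 = Rem 7 8 4"
  "prog ! 8 = Sub 6 6 5"
  "prog ! 9 = Jmp 5"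
  "prog ! 10 = Rem 9 7 0"
  "prog ! 11 = Mul 8 7 1"
  "prog ! 12 = Rem 8 8 4"
  "prog ! 13 = Mul 8 8 1"
  "prog ! 14 = Rem 10 8 4"
  "prog ! 15 = Const 11 1"
  "prog ! 16 = Const 12 1"
  "prog ! 17 = Const 13 1"
  "prog ! 18 = Sub 6 0 5"
  "prog ! 19 = Jz 6 34"
  "prog ! 20 = Div 8 13 0"
  "prog ! 21 = Mul 8 8 12"
  "prog ! 22 = Rem 8 8 0"
  "prog ! 23 = Const 14 (-2)"
  "prog ! 24 = Sub 14 14 11"
  "prog ! 25 = Store 14 8"
  "prog ! 26 = Mul 15 11 1"
  "prog ! 27 = Rem 11 15 0"
  "prog ! 28 = Mul 15 12 9"
  "prog ! 29 = Rem 12 15 0"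
  "prog ! 30 = Mul 15 13 10"
  "prog ! 31 = Rem 13 15 4"
  "prog ! 32 = Sub 6 6 5"
  "prog ! 33 = Jmp 19"
  "prog ! 34 = Const 1 1"
  "prog ! 35 = Sub 1 0 1"
  "prog ! 36 = Jz 1 44"
  "prog ! 37 = Const 1 0"
  "prog ! 38 = Sub 1 1 0"
  "prog ! 39 = Load 1 1"
  "prog ! 40 = Store 0 1"
  "prog ! 41 = Const 1 1"
  "prog ! 42 = Sub 0 0 1"
  "prog ! 43 = Jmp 34"
  "prog ! 44 = Halt"
  by (simp_all add: prog_def)

lemma step_at: "prog ! pc = ins \<Longrightarrow> pc < 45 \<Longrightarrow> ins \<noteq> Halt \<Longrightarrow> step prog (pc, M) = exec_instr ins (pc, M)"
  by (simp add: step_def halted_def length_prog)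

definition bnd :: "nat \<Rightarrow> (int \<Rightarrow> int) \<Rightarrow> bool" where
  "bnd p M \<longleftrightarrow> (\<forall>a. \<bar>M a\<bar> \<le> int p ^ 4)"

lemma bnd_upd: "bnd p M \<Longrightarrow> \<bar>v\<bar> \<le> int p ^ 4 \<Longrightarrow> bnd p (M(a := v))"
  by (simp add: bnd_def)

definition good :: "nat \<Rightarrow> nat \<Rightarrow> state \<Rightarrow> bool" where
  "good p n s \<longleftrightarrow> (\<forall>m \<le> n. bnd p (snd (run prog m s)))"

lemma run_0[simp]: "run pr 0 s = s" by (simp add: run_def)
lemma run_Suc: "run pr (Suc n) s = run pr n (step pr s)"
  unfolding run_def funpow_Suc_right by simp
lemma run_add: "run pr (a + b) s = run pr b (run pr a s)"
  unfolding run_def by (metis add.commute comp_apply funpow_add)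

lemma run_num: "run pr (numeral n) s = run pr (pred_numeral n) (step pr s)"
  by (simp add: numeral_eq_Suc run_Suc)

lemma good_0: "good p 0 s = bnd p (snd s)" by (simp add: good_def)
lemma good_Suc: "good p (Suc n) s = (bnd p (snd s) \<and> good p n (step prog s))"
  unfolding good_def
  apply (auto simp: run_Suc)
  apply (case_tac m) apply (auto simp: run_Suc)
  done

lemma good_num: "good p (numeral n) s = (bnd p (snd s) \<and> good p (pred_numeral n) (step prog s))"
  by (simp add: numeral_eq_Suc good_Suc)

lemma good_add: "good p a s \<Longrightarrow> good p b (run prog a s) \<Longrightarrow> good p (a + b) s"
  unfolding good_def
proof (intro allI impI)
  fix m assume A: "\<forall>m\<le>a. bnd p (snd (run prog m s))" and B: "\<forall>m\<le>b. bnd p (snd (run prog m (run prog a s)))"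
    and m: "m \<le> a + b"
  show "bnd p (snd (run prog m s))"
  proof (cases "m \<le> a")
    case True then show ?thesis using A by simp
  next
    case False
    then obtain d where "m = a + d" "d \<le> b" using m by (metis add_le_imp_le_left le_add_diff_inverse nat_le_linear)
    then show ?thesis using B by (simp add: run_add)
  qed
qed

lemma loop:
  assumes "\<And>k s. k < N \<Longrightarrow> I k s \<Longrightarrow> I (Suc k) (run prog L s) \<and> good p L s"
    and "I 0 s" and "\<And>k s. I k s \<Longrightarrow> bnd p (snd s)"
  shows "k \<le> N \<Longrightarrow> I k (run prog (L*k) s) \<and> good p (L*k) s"
proof (induction k)
  case 0 then show ?case using assms(2,3) by (simp add: good_def)
next
  case (Suc k)
  then have IH: "I k (run prog (L*k) s)" "good p (L*k) s" by auto
  have "I (Suc k) (run prog L (run prog (L*k) s)) \<and> good p L (run prog (L*k) s)"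
    using assms(1)[OF _ IH(1)] Suc.prems by simp
  then show ?case using good_add[OF IH(2)] by (simp add: run_add[symmetric] algebra_simps)
qed

lemma P4: fixes P :: int shows "P^4 = (P*P)*(P*P)" unfolding power4_eq_xxxx by (simp add: mult.assoc)

lemma mulb: fixes a b P :: int
  shows "0 \<le> a \<Longrightarrow> a \<le> P*P \<Longrightarrow> 0 \<le> b \<Longrightarrow> b \<le> P*P \<Longrightarrow> \<bar>a*b\<bar> \<le> P^4"
proof -
  assume "0 \<le> a" "a \<le> P*P" "0 \<le> b" "b \<le> P*P"
  then have "a*b \<le> (P*P)*(P*P)" "0 \<le> a*b" by (auto intro: mult_mono)
  then show ?thesis by (simp add: P4)
qed

lemma le_PP: fixes x P :: int shows "x \<le> P \<Longrightarrow> 1 \<le> P \<Longrightarrow> x \<le> P*P"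
proof -
  assume "x \<le> P" "1 \<le> P"
  moreover have "P*1 \<le> P*P" using \<open>1 \<le> P\<close> by (intro mult_left_mono) auto
  ultimately show ?thesis by linarith
qed

lemma smallb: fixes a P :: int
  shows "0 \<le> a \<Longrightarrow> a \<le> P*P \<Longrightarrow> 1 \<le> P \<Longrightarrow> \<bar>a\<bar> \<le> P^4"
proof -
  assume "0 \<le> a" "a \<le> P*P" "1 \<le> P"
  moreover have "1 \<le> P*P" using le_PP[of 1 P] \<open>1 \<le> P\<close> by simp
  moreover have "P*P*1 \<le> P*P*(P*P)" using calculation by (intro mult_left_mono) auto
  ultimately show ?thesis unfolding P4 by linarith
qed

lemma smallb': fixes a P :: int
  shows "\<bar>a\<bar> \<le> P*P \<Longrightarrow> 1 \<le> P \<Longrightarrow> \<bar>a\<bar> \<le> P^4"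
  using smallb[of "\<bar>a\<bar>" P] by simp

lemma prog_nth1: "prog ! Suc 0 = Const 5 1" "prog ! Suc (Suc 0) = Const 7 1"
  "prog ! Suc (Suc (Suc 0)) = Sub 6 0 5" "prog ! Suc (Suc (Suc (Suc 0))) = Sub 6 6 5"
  by (simp_all add: prog_def)

lemmas stepsimps = step_at prog_nth prog_nth1

definition Inv1 :: "nat \<Rightarrow> nat \<Rightarrow> nat \<Rightarrow> state \<Rightarrow> bool" where
 "Inv1 p g k s \<longleftrightarrow> fst s = 5 \<and> snd s 0 = int p \<and> snd s 1 = int g \<and> snd s 4 = int p * int p
    \<and> snd s 5 = 1 \<and> snd s 6 = int (p - 2 - k) \<and> snd s 7 = int g ^ k mod (int p * int p)
    \<and> (\<forall>a<0. snd s a = 0) \<and> bnd p (snd s)"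

lemma loop1_body:
  assumes p: "prime p" "1 < g" "g < p" and k: "k < p - 2" and I: "Inv1 p g k s"
  shows "Inv1 p g (Suc k) (run prog 5 s) \<and> good p 5 s"
proof -
  obtain M where s: "s = (5, M)" using I by (cases s) (simp add: Inv1_def)
  define P where "P = int p"
  define G where "G = int g"
  have P3: "P \<ge> 3" using p P_def by simp
  have G: "0 < G" "G < P" using p P_def G_def by auto
  have M: "M 0 = P" "M 1 = G" "M 4 = P*P" "M 5 = 1" "M 6 = int (p - 2 - k)" "M 7 = G^k mod (P*P)"
     "\<forall>a<0. M a = 0" "bnd p M"
    using I s P_def G_def by (auto simp: Inv1_def)
  have c: "int (p - 2 - k) \<noteq> 0" "int (p - 2 - k) - 1 = int (p - 2 - Suc k)" using k by auto
  have pw: "(G^k mod (P*P) * G) mod (P*P) = G^(Suc k) mod (P*P)"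
    by (simp add: mod_mult_left_eq mod_mult_right_eq mult.commute)
  have m1: "0 \<le> G^k mod (P*P)" "G^k mod (P*P) < P*P" using P3 by auto
  have b1: "\<bar>G^k mod (P*P) * G\<bar> \<le> P^4" using m1 G P3 by (intro mulb) (auto intro: le_PP less_imp_le)
  have PP: "0 < P*P" using P3 by simp
  have b2: "\<bar>(G^k mod (P*P) * G) mod (P*P)\<bar> \<le> P^4" using P3 PP by (intro smallb) (auto intro: less_imp_le)
  have b3: "\<bar>int (p - 2 - Suc k)\<bar> \<le> P^4" using P3 P_def by (intro smallb le_PP) auto
  have kP: "2 + int k < P" using k P_def by simp
  show ?thesis
    using M c pw b1 b2 b3 kP
    by (simp add: s run_num run_Suc good_num good_Suc good_0 stepsimps Inv1_def P_def[symmetric] G_def[symmetric] bnd_upd)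
qed



definition Wv :: "nat \<Rightarrow> nat \<Rightarrow> int" where
  "Wv p g = int g ^ (p - 2) mod (int p * int p)"
definition ginv :: "nat \<Rightarrow> nat \<Rightarrow> int" where
  "ginv p g = Wv p g mod int p"
definition Bg :: "nat \<Rightarrow> nat \<Rightarrow> int" where
  "Bg p g = ((Wv p g * int g) mod (int p * int p) * int g) mod (int p * int p)"
definition out :: "nat \<Rightarrow> nat \<Rightarrow> nat \<Rightarrow> int \<Rightarrow> int" where
  "out p g k a = (if \<exists>j<k. a = -(2 + int g ^ j mod int p) then fermat_quotient p (-a-2) else 0)"

lemma out_Suc: "out p g (Suc k) a = (if a = -2 - int g ^ k mod int p then fermat_quotient p (-a-2) else out p g k a)"
  unfolding out_def by (auto simp: less_Suc_eq)

lemma ginv_pow: "prime p \<Longrightarrow> ginv p g ^ k mod int p = int g ^ ((p-2)*k) mod int p"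
proof -
  have "ginv p g = int g ^ (p-2) mod int p"
    unfolding ginv_def Wv_def by (simp add: mod_mod_cancel)
  then show ?thesis by (simp only: power_mod power_mult)
qed

lemma Bg_pow: assumes "prime p" shows "Bg p g ^ k mod (int p * int p) = int g ^ (p*k) mod (int p * int p)"
proof -
  define n where "n = p - 2"
  have pn: "p = Suc (Suc n)" using prime_ge_2_nat[OF assms] n_def by simp
  have p2: "int g ^ (p-2) * int g * int g = int g ^ p" unfolding pn by (simp add: algebra_simps)
  have mm: "\<And>a b c m :: int. ((a mod m * b) mod m * c) mod m = (a*b*c) mod m"
    by (simp add: mod_mult_left_eq)
  have "Bg p g = int g ^ p mod (int p * int p)"
    unfolding Bg_def Wv_def mm p2 ..
  then show ?thesis by (simp only: power_mod power_mult)
qed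

definition Inv2 :: "nat \<Rightarrow> nat \<Rightarrow> nat \<Rightarrow> state \<Rightarrow> bool" where
 "Inv2 p g k s \<longleftrightarrow> fst s = 19 \<and> snd s 0 = int p \<and> snd s 1 = int g \<and> snd s 4 = int p * int p
    \<and> snd s 5 = 1 \<and> snd s 6 = int p - 1 - int k \<and> snd s 9 = ginv p g \<and> snd s 10 = Bg p g
    \<and> snd s 11 = int g ^ k mod int p \<and> snd s 12 = ginv p g ^ k mod int p
    \<and> snd s 13 = Bg p g ^ k mod (int p * int p)
    \<and> (\<forall>a<0. snd s a = out p g k a) \<and> bnd p (snd s)"

lemma loop2_body:
  assumes p: "prime p" "1 < g" "g < p" and k: "k < p - 1" and I: "Inv2 p g k s"
  shows "Inv2 p g (Suc k) (run prog 15 s) \<and> good p 15 s"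
proof -
  obtain M where s: "s = (19, M)" using I by (cases s) (simp add: Inv2_def)
  define P where "P = int p"
  define G where "G = int g"
  define h where "h = ginv p g"
  define bg where "bg = Bg p g"
  define x where "x = G^k mod P"
  define hk where "hk = h^k mod P"
  define B where "B = bg^k mod (P*P)"
  have P3: "P \<ge> 3" using p P_def by simp
  have PP: "0 < P*P" using P3 by simp
  have G: "0 < G" "G < P" using p P_def G_def by auto
  have M: "M 0 = P" "M 1 = G" "M 4 = P*P" "M 5 = 1" "M 6 = P - 1 - int k" "M 9 = h" "M 10 = bg"
     "M 11 = x" "M 12 = hk" "M 13 = B" "\<forall>a<0. M a = out p g k a" "bnd p M"
    using I s unfolding Inv2_def P_def G_def h_def bg_def x_def hk_def B_def by auto
  have c: "P - 1 - int k \<noteq> 0" using k P_def by auto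
  have r: "0 \<le> x" "x < P" "0 \<le> hk" "hk < P" "0 \<le> B" "B < P*P" "0 \<le> h" "h < P" "0 \<le> bg" "bg < P*P"
    using P3 PP unfolding x_def hk_def B_def h_def bg_def ginv_def Bg_def P_def by auto
  have pw: "(x * G) mod P = G^(Suc k) mod P" "(hk * h) mod P = h^(Suc k) mod P"
    "(B * bg) mod (P*P) = bg^(Suc k) mod (P*P)"
    unfolding x_def hk_def B_def by (simp_all add: mod_mult_left_eq mod_mult_right_eq mult.commute)
  have hk2: "hk = G^((p-2)*k) mod P" using ginv_pow[OF p(1), of g k] unfolding hk_def h_def G_def P_def .
  have B2: "B = G^(p*k) mod P^2" using Bg_pow[OF p(1), of g k] unfolding B_def bg_def G_def P_def power2_eq_square .
  have nd: "\<not> int p dvd G" using G P_def zdvd_not_zless by auto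
  have q: "(B div P * hk) mod P = fermat_quotient p x"
    using key[OF p(1) nd, of k] unfolding hk2 B2 x_def P_def by (simp add: mult.commute)
  have fqb: "0 \<le> fermat_quotient p x" "fermat_quotient p x < P"
    using P3 unfolding fermat_quotient_def P_def by auto
  have bs: "\<bar>B div P\<bar> \<le> P^4" "\<bar>B div P * hk\<bar> \<le> P^4" "\<bar>B div P * hk mod P\<bar> \<le> P^4"
    "\<bar>-2 :: int\<bar> \<le> P^4" "\<bar>-2 - x\<bar> \<le> P^4" "\<bar>x * G\<bar> \<le> P^4" "\<bar>hk * h\<bar> \<le> P^4"
    "\<bar>B * bg\<bar> \<le> P^4" "\<bar>x * G mod P\<bar> \<le> P^4" "\<bar>hk * h mod P\<bar> \<le> P^4"
    "\<bar>B * bg mod (P*P)\<bar> \<le> P^4" "\<bar>P - int k - 2\<bar> \<le> P^4"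
  proof -
    have P1: "1 \<le> P" using P3 by simp
    have lp: "\<And>v. v \<le> P \<Longrightarrow> v \<le> P*P" using P1 le_PP by blast
    have mb: "\<And>v. v mod P \<le> P*P" "\<And>v. 0 \<le> v mod P"
    proof -
      fix v
      have "v mod P < P" using P3 by simp
      then show "v mod P \<le> P*P" using lp by simp
      show "0 \<le> v mod P" using P3 by simp
    qed
    have rl: "x \<le> P*P" "hk \<le> P*P" "h \<le> P*P" "G \<le> P*P" "B \<le> P*P" "bg \<le> P*P"
      using r G lp by auto
    have "B div P \<le> B div 1" by (rule zdiv_mono2) (use r P3 in auto)
    then have d: "0 \<le> B div P" "B div P \<le> P*P" using r P3
      by (auto simp: pos_imp_zdiv_nonneg_iff)
    show "\<bar>B div P\<bar> \<le> P^4" using d P1 by (intro smallb)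
    show "\<bar>B div P * hk\<bar> \<le> P^4" using d r rl by (intro mulb) auto
    show "\<bar>B div P * hk mod P\<bar> \<le> P^4" using P3 mb by (intro smallb) auto
    show "\<bar>-2 :: int\<bar> \<le> P^4" using P3 lp by (intro smallb') auto
    show "\<bar>-2 - x\<bar> \<le> P^4"
    proof (intro smallb' P1)
      have "3*P \<le> P*P" by (rule mult_right_mono) (use P3 in auto)
      then have "P + 2 \<le> P*P" using P3 by linarith
      then show "\<bar>-2 - x\<bar> \<le> P*P" using r by simp
    qed
    show "\<bar>x * G\<bar> \<le> P^4" using r G rl by (intro mulb) auto
    show "\<bar>hk * h\<bar> \<le> P^4" using r rl by (intro mulb) auto
    show "\<bar>B * bg\<bar> \<le> P^4" using r rl by (intro mulb) auto
    show "\<bar>x * G mod P\<bar> \<le> P^4" using P3 mb by (intro smallb) auto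
    show "\<bar>hk * h mod P\<bar> \<le> P^4" using P3 mb by (intro smallb) auto
    show "\<bar>B * bg mod (P*P)\<bar> \<le> P^4"
    proof (intro smallb P1)
      show "B * bg mod (P*P) \<le> P*P" using pos_mod_bound[OF PP, of "B*bg"] by simp
    qed (use PP in simp)
    show "\<bar>P - int k - 2\<bar> \<le> P^4" using P3 lp k P_def by (intro smallb) auto
  qed
  have ne: "(0::int) \<noteq> -2 - x" "(1::int) \<noteq> -2 - x" "(4::int) \<noteq> -2 - x" "(5::int) \<noteq> -2 - x"
    "(6::int) \<noteq> -2 - x" "(8::int) \<noteq> -2 - x" "(9::int) \<noteq> -2 - x" "(10::int) \<noteq> -2 - x"
    "(11::int) \<noteq> -2 - x" "(12::int) \<noteq> -2 - x" "(13::int) \<noteq> -2 - x" "(14::int) \<noteq> -2 - x"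
    "(15::int) \<noteq> -2 - x"
    using r by auto
  show ?thesis
  proof
    show "Inv2 p g (Suc k) (run prog 15 s)"
      using M ne c apply (simp add: s run_num run_Suc stepsimps)
      unfolding Inv2_def fst_conv snd_conv
      apply (intro conjI allI impI bnd_upd)
      apply (simp_all only: P_def[symmetric] bs M(12))
      apply (simp_all add: G_def[symmetric] h_def[symmetric] bg_def[symmetric] pw q)
      using M(11) apply (auto simp: out_Suc x_def G_def P_def)
      done
    show "good p 15 s"
      using M ne c apply (simp add: s run_num run_Suc good_num good_Suc good_0 stepsimps)
      apply (intro conjI bnd_upd)
      apply (simp_all only: P_def[symmetric] bs M(12))
      done
  qed
qed



lemma fq_bound: "p \<ge> 2 \<Longrightarrow> 0 \<le> fermat_quotient p u \<and> fermat_quotient p u < int p"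
  unfolding fermat_quotient_def by auto

lemma out_bound: "p \<ge> 2 \<Longrightarrow> \<bar>out p g k a\<bar> \<le> int p"
  unfolding out_def using fq_bound[of p "-a-2"] by auto

definition Inv3 :: "nat \<Rightarrow> nat \<Rightarrow> nat \<Rightarrow> state \<Rightarrow> bool" where
 "Inv3 p g k s \<longleftrightarrow> fst s = 34 \<and> snd s 0 = int p - int k
    \<and> (\<forall>a<0. snd s a = out p g (p-1) a)
    \<and> (\<forall>a. 2 \<le> a \<and> a \<le> int p \<and> int p - int k < a \<longrightarrow> snd s a = out p g (p-1) (-a))
    \<and> bnd p (snd s)"

lemma loop3_body:
  assumes p: "prime p" and k: "k < p - 1" and I: "Inv3 p g k s"
  shows "Inv3 p g (Suc k) (run prog 10 s) \<and> good p 10 s"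
proof -
  obtain M where s: "s = (34, M)" using I by (cases s) (simp add: Inv3_def)
  define P where "P = int p"
  define i where "i = P - int k"
  define v where "v = out p g (p-1) (-i)"
  have P2: "P \<ge> 2" using p P_def prime_ge_2_nat by simp
  have i2: "2 \<le> i" "i \<le> P" using k i_def P_def by auto
  have M: "M 0 = i" "M (-i) = v" "\<forall>a<0. M a = out p g (p-1) a"
    "\<forall>a. 2 \<le> a \<and> a \<le> P \<and> i < a \<longrightarrow> M a = out p g (p-1) (-a)" "bnd p M"
    using I s i2 unfolding Inv3_def P_def i_def v_def by auto
  have ne: "i - 1 \<noteq> 0" "-i \<noteq> 1" "-i \<noteq> 0" "1 \<noteq> -i" "0 \<noteq> -i" "1 \<noteq> i" "0 \<noteq> i" "i \<noteq> 1" "i \<noteq> 0"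
    using i2 by auto
  have P1: "1 \<le> P" using P2 by simp
  have lp: "\<And>w. w \<le> P \<Longrightarrow> w \<le> P*P" using P1 le_PP by blast
  have bs: "\<bar>1::int\<bar> \<le> P^4" "\<bar>0::int\<bar> \<le> P^4" "\<bar>i - 1\<bar> \<le> P^4" "\<bar>-i\<bar> \<le> P^4" "\<bar>v\<bar> \<le> P^4"
  proof -
    show "\<bar>1::int\<bar> \<le> P^4" using P1 lp by (intro smallb) auto
    show "\<bar>0::int\<bar> \<le> P^4" using P1 lp by (intro smallb) auto
    show "\<bar>i - 1\<bar> \<le> P^4" using P1 lp i2 by (intro smallb) auto
    show "\<bar>-i\<bar> \<le> P^4" using P1 lp i2 by (intro smallb') auto
    show "\<bar>v\<bar> \<le> P^4" using P1 lp out_bound[of p g "p-1" "-i"] P2 unfolding v_def P_def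
      by (intro smallb') auto
  qed
  show ?thesis
  proof
    show "Inv3 p g (Suc k) (run prog 10 s)"
      using M ne apply (simp add: s run_num run_Suc stepsimps)
      unfolding Inv3_def fst_conv snd_conv
      apply (intro conjI allI impI bnd_upd)
      apply (simp_all only: P_def[symmetric] bs M(5))
      using M(3,4) i2 unfolding i_def v_def apply auto
      done
    show "good p 10 s"
      using M ne apply (simp add: s run_num run_Suc good_num good_Suc good_0 stepsimps)
      apply (intro conjI bnd_upd)
      apply (simp_all only: P_def[symmetric] bs M(5))
      done
  qed
qed



lemma part0:
  assumes p: "prime p" "1 < g" "g < p"
  shows "Inv1 p g 0 (run prog 5 (init_state p g)) \<and> good p 5 (init_state p g)"
proof -
  define P where "P = int p"
  define G where "G = int g"
  have P3: "P \<ge> 3" using p P_def by simp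
  have P1: "1 \<le> P" using P3 by simp
  have lp: "\<And>w. w \<le> P \<Longrightarrow> w \<le> P*P" using P1 le_PP by blast
  have PP: "1 < P*P" using lp[of 3] P3 by simp
  have f: "P - 1 - 1 = int (p - 2)" "1 mod (P*P) = 1" using P3 PP P_def by auto
  have bs: "\<bar>P\<bar> \<le> P^4" "\<bar>G\<bar> \<le> P^4" "\<bar>P*P\<bar> \<le> P^4" "\<bar>1::int\<bar> \<le> P^4" "\<bar>P - 1\<bar> \<le> P^4"
     "\<bar>P - 1 - 1\<bar> \<le> P^4" "bnd p (\<lambda>_. 0)" "\<bar>P - 2\<bar> \<le> P^4"
  proof -
    show "\<bar>P\<bar> \<le> P^4" using P1 lp by (intro smallb) auto
    show "\<bar>G\<bar> \<le> P^4" using P1 lp p G_def P_def by (intro smallb) auto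
    show "\<bar>P*P\<bar> \<le> P^4" using P1 by (intro smallb) auto
    show "\<bar>1::int\<bar> \<le> P^4" using P1 lp by (intro smallb) auto
    show "\<bar>P - 1\<bar> \<le> P^4" using P1 lp by (intro smallb) auto
    show "\<bar>P - 1 - 1\<bar> \<le> P^4" using P3 lp by (intro smallb) auto
    show "bnd p (\<lambda>_. 0)" by (simp add: bnd_def)
    show "\<bar>P - 2\<bar> \<le> P^4" using P3 lp by (intro smallb) auto
  qed
  show ?thesis
  proof
    show "Inv1 p g 0 (run prog 5 (init_state p g))"
      apply (simp add: init_state_def run_num run_Suc stepsimps)
      unfolding Inv1_def fst_conv snd_conv
      apply (intro conjI allI impI bnd_upd)
      apply (simp_all only: P_def[symmetric] G_def[symmetric] bs)
      using f apply auto
      done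
    show "good p 5 (init_state p g)"
      apply (simp add: init_state_def run_num run_Suc good_num good_Suc good_0 stepsimps)
      apply (intro conjI bnd_upd)
      apply (simp_all only: P_def[symmetric] G_def[symmetric] bs)
      done
  qed
qed

lemma part1:
  assumes p: "prime p" "1 < g" "g < p" and I: "Inv1 p g (p-2) s"
  shows "Inv2 p g 0 (run prog 10 s) \<and> good p 10 s"
proof -
  obtain M where s: "s = (5, M)" using I by (cases s) (simp add: Inv1_def)
  define P where "P = int p"
  define G where "G = int g"
  define W where "W = Wv p g"
  have P3: "P \<ge> 3" using p P_def by simp
  have P1: "1 \<le> P" using P3 by simp
  have lp: "\<And>w. w \<le> P \<Longrightarrow> w \<le> P*P" using P1 le_PP by blast
  have PP: "1 < P*P" using lp[of 3] P3 by simp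
  have G: "0 < G" "G < P" using p P_def G_def by auto
  have M: "M 0 = P" "M 1 = G" "M 4 = P*P" "M 5 = 1" "M 6 = 0" "M 7 = W"
     "\<forall>a<0. M a = 0" "bnd p M"
    using I s unfolding Inv1_def P_def G_def W_def Wv_def by auto
  have W: "0 \<le> W" "W < P*P" using PP unfolding W_def Wv_def P_def by auto
  have bs: "\<bar>W mod P\<bar> \<le> P^4" "\<bar>W * G\<bar> \<le> P^4" "\<bar>W * G mod (P*P)\<bar> \<le> P^4"
     "\<bar>W * G mod (P*P) * G\<bar> \<le> P^4" "\<bar>W * G mod (P*P) * G mod (P*P)\<bar> \<le> P^4"
     "\<bar>1::int\<bar> \<le> P^4" "\<bar>P - 1\<bar> \<le> P^4"
  proof -
    have m1: "W mod P < P" "0 \<le> W mod P" using P3 by auto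
    have m2: "\<And>w. w mod (P*P) < P*P" "\<And>w. 0 \<le> w mod (P*P)" using PP by auto
    show "\<bar>W mod P\<bar> \<le> P^4" using P1 lp m1 by (intro smallb) auto
    show "\<bar>W * G\<bar> \<le> P^4" using W G lp by (intro mulb) auto
    show "\<bar>W * G mod (P*P)\<bar> \<le> P^4" by (intro smallb m2(2) less_imp_le[OF m2(1)] P1)
    show "\<bar>W * G mod (P*P) * G\<bar> \<le> P^4" by (intro mulb m2(2) less_imp_le[OF m2(1)]) (use G lp in auto)
    show "\<bar>W * G mod (P*P) * G mod (P*P)\<bar> \<le> P^4" by (intro smallb m2(2) less_imp_le[OF m2(1)] P1)
    show "\<bar>1::int\<bar> \<le> P^4" using P1 lp by (intro smallb) auto
    show "\<bar>P - 1\<bar> \<le> P^4" using P1 lp by (intro smallb) auto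
  qed
  have f: "1 mod P = 1" "1 mod (P*P) = 1" using P3 PP by auto
  show ?thesis
  proof
    show "Inv2 p g 0 (run prog 10 s)"
      using M apply (simp add: s run_num run_Suc stepsimps)
      unfolding Inv2_def fst_conv snd_conv
      apply (intro conjI allI impI bnd_upd)
      apply (simp_all only: P_def[symmetric] G_def[symmetric] bs M(8))
      using f unfolding ginv_def Bg_def W_def[symmetric] out_def apply (auto simp: P_def G_def)
      done
    show "good p 10 s"
      using M apply (simp add: s run_num run_Suc good_num good_Suc good_0 stepsimps)
      apply (intro conjI bnd_upd)
      apply (simp_all only: P_def[symmetric] bs M(8))
      done
  qed
qed

lemma part2:
  assumes I: "Inv2 p g (p-1) s" and p: "prime p"
  shows "Inv3 p g 0 (run prog 1 s) \<and> good p 1 s"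
proof -
  obtain M where s: "s = (19, M)" using I by (cases s) (simp add: Inv2_def)
  have M: "M 0 = int p" "M 6 = 0" "\<forall>a<0. M a = out p g (p-1) a" "bnd p M"
    using I s p prime_ge_2_nat[OF p] unfolding Inv2_def by auto
  show ?thesis
    using M by (simp add: s run_Suc good_Suc good_0 stepsimps Inv3_def)
qed

lemma part3:
  assumes I: "Inv3 p g (p-1) s" and p: "prime p"
  shows "halted prog (run prog 3 s) \<and> good p 3 s \<and>
     (\<forall>u < p - 1. snd (run prog 3 s) (2 + int u) = out p g (p-1) (-(2 + int u)))"
proof -
  obtain M where s: "s = (34, M)" using I by (cases s) (simp add: Inv3_def)
  have p2: "p \<ge> 2" using prime_ge_2_nat[OF p] .
  have M: "M 0 = 1" "\<forall>a. 2 \<le> a \<and> a \<le> int p \<and> 1 < a \<longrightarrow> M a = out p g (p-1) (-a)" "bnd p M"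
    using I s p2 unfolding Inv3_def by auto
  have bs: "\<bar>1::int\<bar> \<le> int p ^ 4" "\<bar>0::int\<bar> \<le> int p ^ 4"
    using p2 by (auto intro: smallb)
  show ?thesis
    using M bs apply (simp add: s run_num run_Suc good_num good_Suc good_0 stepsimps bnd_upd)
    apply (simp add: halted_def prog_nth length_prog)
    done
qed



lemma out_final:
  assumes p: "prime p" and r: "residue_primroot p g" and u: "u < p - 1"
  shows "out p g (p-1) (-(2 + int u)) = fermat_quotient p (int u)"
proof (cases "u = 0")
  case True
  then show ?thesis by (simp add: out_def fermat_quotient_def)
next
  case False
  have p1: "p > 1" using prime_gt_1_nat[OF p] .
  have "(\<lambda>i. g ^ i mod p) ` {..<totient p} = totatives p"
    using residue_primroot_is_generator[OF p1 r] by (simp add: bij_betw_def)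
  moreover have "u \<in> totatives p" using False u p by (simp add: totatives_prime)
  ultimately obtain j where j: "j < totient p" "g ^ j mod p = u" by force
  have "j < p - 1" using j totient_prime[OF p] by simp
  moreover have "int g ^ j mod int p = int u" using j(2) by (metis of_nat_mod of_nat_power)
  ultimately have "\<exists>j<p-1. -(2 + int u) = -(2 + int g ^ j mod int p)" by auto
  then show ?thesis by (simp add: out_def)
qed

lemma main_run:
  assumes p: "prime p" and r: "residue_primroot p g" and g: "1 < g" "g < p"
  shows "\<exists>n \<le> 30 * p.
          halted prog (run prog n (init_state p g)) \<and>
          (\<forall>m \<le> n. \<forall>a. \<bar>snd (run prog m (init_state p g)) a\<bar> \<le> int p ^ 4) \<and>
          (\<forall>u < p - 1. snd (run prog n (init_state p g)) (2 + int u)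
                          = fermat_quotient p (int u))"
proof -
  define s0 where "s0 = init_state p g"
  define s1 where "s1 = run prog 5 s0"
  have A: "Inv1 p g 0 s1" "good p 5 s0" using part0[OF p g] s0_def s1_def by auto
  define s2 where "s2 = run prog (5*(p-2)) s1"
  have B: "Inv1 p g (p-2) s2" "good p (5*(p-2)) s1"
    using loop[of "p-2" "Inv1 p g" 5 p s1, OF _ A(1) _ order.refl] loop1_body[OF p g] s2_def
    by (auto simp: Inv1_def)
  define s3 where "s3 = run prog 10 s2"
  have C: "Inv2 p g 0 s3" "good p 10 s2" using part1[OF p g B(1)] s3_def by auto
  define s4 where "s4 = run prog (15*(p-1)) s3"
  have D: "Inv2 p g (p-1) s4" "good p (15*(p-1)) s3"
    using loop[of "p-1" "Inv2 p g" 15 p s3, OF _ C(1) _ order.refl] loop2_body[OF p g] s4_def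
    by (auto simp: Inv2_def)
  define s5 where "s5 = run prog 1 s4"
  have E: "Inv3 p g 0 s5" "good p 1 s4" using part2[OF D(1) p] s5_def by auto
  define s6 where "s6 = run prog (10*(p-1)) s5"
  have F: "Inv3 p g (p-1) s6" "good p (10*(p-1)) s5"
  proof -
    have b: "\<And>k s. k < p-1 \<Longrightarrow> Inv3 p g k s \<Longrightarrow> Inv3 p g (Suc k) (run prog 10 s) \<and> good p 10 s"
      using loop3_body[OF p] by blast
    have c: "\<And>k s. Inv3 p g k s \<Longrightarrow> bnd p (snd s)" by (simp add: Inv3_def)
    show "Inv3 p g (p-1) s6" "good p (10*(p-1)) s5"
      using loop[of "p-1" "Inv3 p g" 10 p s5, OF b E(1) c order.refl] s6_def by auto
  qed
  define s7 where "s7 = run prog 3 s6"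
  have G: "halted prog s7" "good p 3 s6"
    "\<forall>u < p - 1. snd s7 (2 + int u) = out p g (p-1) (-(2 + int u))"
    using part3[OF F(1) p] s7_def by auto
  define n where "n = 5 + (5*(p-2) + (10 + (15*(p-1) + (1 + (10*(p-1) + 3)))))"
  have rn: "run prog n s0 = s7"
    unfolding n_def run_add s1_def[symmetric] s2_def[symmetric] s3_def[symmetric] s4_def[symmetric]
      s5_def[symmetric] s6_def[symmetric] s7_def[symmetric] ..
  have gn: "good p n s0"
    unfolding n_def
    apply (rule good_add[OF A(2)]) unfolding s1_def[symmetric]
    apply (rule good_add[OF B(2)]) unfolding s2_def[symmetric]
    apply (rule good_add[OF C(2)]) unfolding s3_def[symmetric]
    apply (rule good_add[OF D(2)]) unfolding s4_def[symmetric]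
    apply (rule good_add[OF E(2)]) unfolding s5_def[symmetric]
    apply (rule good_add[OF F(2)]) unfolding s6_def[symmetric]
    by (rule G(2))
  have p3: "p \<ge> 3" using g by simp
  have "n \<le> 30 * p" unfolding n_def using p3 by simp
  moreover have "halted prog (run prog n s0)" using rn G(1) by simp
  moreover have "\<forall>m \<le> n. \<forall>a. \<bar>snd (run prog m s0) a\<bar> \<le> int p ^ 4"
    using gn unfolding good_def bnd_def by blast
  moreover have "\<forall>u < p - 1. snd (run prog n s0) (2 + int u) = fermat_quotient p (int u)"
    using rn G(3) out_final[OF p r] by simp
  ultimately show ?thesis unfolding s0_def by blast
qed

theorem theorem5:
  "\<exists>(prog :: instr list) (C :: nat) (c :: nat).
     \<forall>p g :: nat. prime p \<longrightarrow> residue_primroot p g \<longrightarrow> 1 < g \<longrightarrow> g < p \<longrightarrow>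
       (\<exists>n \<le> C * p.
          halted prog (run prog n (init_state p g)) \<and>
          (\<forall>m \<le> n. \<forall>a. \<bar>snd (run prog m (init_state p g)) a\<bar> \<le> int p ^ c) \<and>
          (\<forall>u < p - 1. snd (run prog n (init_state p g)) (2 + int u)
                          = fermat_quotient p (int u)))"
  using main_run by blast

end
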